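(* Let $T$ be a triangle and $a\in[0,1]$. If $h(n,T)\le a n^3(1+o(1))$ as $n\to\infty$, then $h(n,T)\le a n^3$ for every positive integer $n$.
   Context: For a triangle $T$ with side lengths $a_1,a_2,a_3$ and $\varepsilon>0$, with $\varepsilon'=\varepsilon\min\{a_1,a_2,a_3\}$, a triangle $A'B'C'$ is $\varepsilon$-congruent to $T$ if there are $A,B,C\in\mathbb{R}^2$ with $ABC$ congruent to $T$ and $A',B',C'$ within distance $\varepsilon'$ of $A,B,C$ respectively. $h(n,T,\varepsilon)$ is the maximum over $n$-point sets $P\subseteq\mathbb{R}^2$ of the number of 3-subsets of $P$ forming triangles $\varepsilon$-congruent to $T$, and $h(n,T)=\min_{\varepsilon>0}h(n,T,\varepsilon)$. *)

theory Defs
  imports "HOL-Analysis.Analysis"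
begin

definition is_triangle :: "real \<times> real \<times> real \<Rightarrow> bool" where
  "is_triangle T = (case T of (a1, a2, a3) \<Rightarrow>
      0 < a1 \<and> 0 < a2 \<and> 0 < a3 \<and> a1 < a2 + a3 \<and> a2 < a1 + a3 \<and> a3 < a1 + a2)"

definition congruent_tri :: "real^2 \<Rightarrow> real^2 \<Rightarrow> real^2 \<Rightarrow> real \<times> real \<times> real \<Rightarrow> bool" where
  "congruent_tri A B C T = (case T of (a1, a2, a3) \<Rightarrow>
      dist B C = a1 \<and> dist C A = a2 \<and> dist A B = a3)"

definition min_side :: "real \<times> real \<times> real \<Rightarrow> real" where
  "min_side T = (case T of (a1, a2, a3) \<Rightarrow> min a1 (min a2 a3))"

definition eps_congruent :: "real^2 \<Rightarrow> real^2 \<Rightarrow> real^2 \<Rightarrow> real \<times> real \<times> real \<Rightarrow> real \<Rightarrow> bool" where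
  "eps_congruent A' B' C' T \<epsilon> = (\<exists>A B C. congruent_tri A B C T \<and>
      dist A' A \<le> \<epsilon> * min_side T \<and> dist B' B \<le> \<epsilon> * min_side T \<and> dist C' C \<le> \<epsilon> * min_side T)"

definition forms_eps_congruent :: "(real^2) set \<Rightarrow> real \<times> real \<times> real \<Rightarrow> real \<Rightarrow> bool" where
  "forms_eps_congruent S T \<epsilon> = (\<exists>A' B' C'. S = {A', B', C'} \<and> card S = 3 \<and> eps_congruent A' B' C' T \<epsilon>)"

definition count_eps :: "(real^2) set \<Rightarrow> real \<times> real \<times> real \<Rightarrow> real \<Rightarrow> nat" where
  "count_eps P T \<epsilon> = card {S. S \<subseteq> P \<and> card S = 3 \<and> forms_eps_congruent S T \<epsilon>}"

definition h_eps :: "nat \<Rightarrow> real \<times> real \<times> real \<Rightarrow> real \<Rightarrow> nat" where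
  "h_eps n T \<epsilon> = Max {count_eps P T \<epsilon> | P. finite P \<and> card P = n}"

text \<open>h(n,T) = min over eps > 0 of h(n,T,eps) (the least element of a nonempty set of naturals).\<close>

definition h :: "nat \<Rightarrow> real \<times> real \<times> real \<Rightarrow> nat" where
  "h n T = Inf {h_eps n T \<epsilon> | \<epsilon>. \<epsilon> > 0}"

end

theory Submission
  imports Defs
begin

lemma blowup:
  fixes P :: "(real^2) set" and T :: "real \<times> real \<times> real"
  assumes finP: "finite P" and ep: "\<epsilon> > 0" and ms: "min_side T > 0" and mp: "m > 0"
  shows "\<exists>Q. finite Q \<and> card Q = card P * m \<and> m^3 * count_eps P T \<epsilon> \<le> count_eps Q T (2*\<epsilon>)"
proof -
  obtain e :: "real^2" where e: "norm e = 1" using vector_choose_size[of 1] by auto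
  define D where "D = insert 1 {dist p q | p q. p\<in>P \<and> q\<in>P \<and> p\<noteq>q}"
  have "{dist p q | p q. p\<in>P \<and> q\<in>P \<and> p\<noteq>q} \<subseteq> (\<lambda>(p,q). dist p q) ` (P \<times> P)" by auto
  hence finD: "finite D" unfolding D_def using finP by (meson finite_SigmaI finite_imageI finite_insert finite_subset)
  define d where "d = Min D"
  have dpos: "d > 0" unfolding d_def using finD by (auto simp: D_def)
  have dle: "d \<le> dist p q" if "p \<in> P" "q \<in> P" "p \<noteq> q" for p q
    unfolding d_def using finD that by (intro Min_le) (auto simp: D_def)
  define \<delta> where "\<delta> = min d (\<epsilon> * min_side T) / (real m + 1)"
  have \<delta>pos: "\<delta> > 0" unfolding \<delta>_def using dpos ep ms by auto
  have m\<delta>: "real m * \<delta> < min d (\<epsilon> * min_side T)"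
  proof -
    have "real m * \<delta> = min d (\<epsilon> * min_side T) * (real m / (real m + 1))" unfolding \<delta>_def by simp
    also have "\<dots> < min d (\<epsilon> * min_side T) * 1"
      using dpos ep ms by (intro mult_strict_left_mono) auto
    finally show ?thesis by simp
  qed
  define f where "f = (\<lambda>(p::real^2, i::nat). p + (real i * \<delta>) *\<^sub>R e)"
  have dist_f: "dist (f (p,i)) p \<le> \<epsilon> * min_side T" if "i < m" for p i
  proof -
    have "dist (f (p,i)) p = real i * \<delta>" unfolding f_def dist_norm using e \<delta>pos by simp
    also have "\<dots> \<le> real m * \<delta>" using that \<delta>pos by simp
    finally show ?thesis using m\<delta> by linarith
  qed
  have inj: "inj_on f (P \<times> {..<m})"
  proof (rule inj_onI)
    fix x y assume xy: "x \<in> P \<times> {..<m}" "y \<in> P \<times> {..<m}" "f x = f y"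
    obtain p i q j where xy': "x = (p,i)" "y = (q,j)" by (cases x, cases y) auto
    have pq: "p \<in> P" "i \<in> {..<m}" "q \<in> P" "j \<in> {..<m}" and eq: "f (p,i) = f (q,j)"
      using xy xy' by auto
    have "p - q = (real j * \<delta> - real i * \<delta>) *\<^sub>R e" using eq unfolding f_def
      by (simp add: algebra_simps)
    hence nd: "dist p q = \<bar>real j - real i\<bar> * \<delta>" using e \<delta>pos
      by (simp add: dist_norm abs_mult left_diff_distrib[symmetric])
    have "\<bar>real j - real i\<bar> < real m" using pq by auto
    hence "\<bar>real j - real i\<bar> * \<delta> < real m * \<delta>" using \<delta>pos by simp
    hence "dist p q < d" using nd m\<delta> by linarith
    hence pq': "p = q" using dle pq by force
    hence "(real j * \<delta> - real i * \<delta>) *\<^sub>R e = 0" using \<open>p - q = _\<close> by simp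
    hence "real j * \<delta> = real i * \<delta>" using e by auto
    hence "i = j" using \<delta>pos by simp
    thus "x = y" using pq' xy' by simp
  qed
  define Q where "Q = f ` (P \<times> {..<m})"
  have finQ: "finite Q" unfolding Q_def using finP by simp
  have cardQ: "card Q = card P * m" unfolding Q_def using card_image[OF inj] finP
    by (simp add: card_cartesian_product)
  define SP where "SP = {S. S \<subseteq> P \<and> card S = 3 \<and> forms_eps_congruent S T \<epsilon>}"
  define SQ where "SQ = {S. S \<subseteq> Q \<and> card S = 3 \<and> forms_eps_congruent S T (2*\<epsilon>)}"
  have finSP: "finite SP" unfolding SP_def using finP by (rule rev_finite_subset[OF finite_Pow_iff[THEN iffD2]]) auto
  have finSQ: "finite SQ" unfolding SQ_def using finQ by (rule rev_finite_subset[OF finite_Pow_iff[THEN iffD2]]) auto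
  define \<Sigma> where "\<Sigma> = (SIGMA S:SP. (S \<rightarrow>\<^sub>E {..<m}))"
  define \<Phi> where "\<Phi> = (\<lambda>(S, \<sigma>). (\<lambda>x. f (x, \<sigma> x)) ` S)"
  have injS: "inj_on (\<lambda>x. f (x, \<sigma> x)) S" if "S \<subseteq> P" "\<sigma> \<in> S \<rightarrow>\<^sub>E {..<m}" for S \<sigma>
  proof (rule inj_onI)
    fix x y assume "x \<in> S" "y \<in> S" "f (x, \<sigma> x) = f (y, \<sigma> y)"
    thus "x = y" using inj_onD[OF inj] that by fastforce
  qed
  have img: "\<Phi> ` \<Sigma> \<subseteq> SQ"
  proof
    fix X assume "X \<in> \<Phi> ` \<Sigma>"
    then obtain S \<sigma> where S: "S \<in> SP" and \<sigma>: "\<sigma> \<in> S \<rightarrow>\<^sub>E {..<m}" and X: "X = \<Phi> (S, \<sigma>)"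
      by (auto simp: \<Sigma>_def)
    have SsP: "S \<subseteq> P" and c3: "card S = 3" and fe: "forms_eps_congruent S T \<epsilon>" using S by (auto simp: SP_def)
    obtain A' B' C' where SA: "S = {A', B', C'}" and ec: "eps_congruent A' B' C' T \<epsilon>"
      using fe unfolding forms_eps_congruent_def by blast
    obtain A B C where cg: "congruent_tri A B C T" and dA: "dist A' A \<le> \<epsilon> * min_side T"
      and dB: "dist B' B \<le> \<epsilon> * min_side T" and dC: "dist C' C \<le> \<epsilon> * min_side T"
      using ec unfolding eps_congruent_def by blast
    have mem: "\<sigma> A' < m" "\<sigma> B' < m" "\<sigma> C' < m" using \<sigma> SA by auto
    have tr: "dist (f (X, \<sigma> X)) Y \<le> 2 * \<epsilon> * min_side T" if "\<sigma> X < m" "dist X Y \<le> \<epsilon> * min_side T" for X Y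
      using dist_triangle[of "f (X, \<sigma> X)" Y X] dist_f[OF that(1), of X] that(2) by linarith
    have cimg: "card (\<Phi> (S, \<sigma>)) = 3" unfolding \<Phi>_def using card_image[OF injS[OF SsP \<sigma>]] c3 by simp
    have "\<Phi> (S, \<sigma>) = {f (A', \<sigma> A'), f (B', \<sigma> B'), f (C', \<sigma> C')}" unfolding \<Phi>_def SA by auto
    moreover have "eps_congruent (f (A', \<sigma> A')) (f (B', \<sigma> B')) (f (C', \<sigma> C')) T (2*\<epsilon>)"
      unfolding eps_congruent_def using cg tr[OF mem(1) dA] tr[OF mem(2) dB] tr[OF mem(3) dC]
      by (auto simp: mult.assoc)
    ultimately have "forms_eps_congruent (\<Phi> (S, \<sigma>)) T (2*\<epsilon>)"
      unfolding forms_eps_congruent_def using cimg by blast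
    moreover have "\<Phi> (S, \<sigma>) \<subseteq> Q" unfolding \<Phi>_def Q_def using SsP \<sigma> by auto
    ultimately show "X \<in> SQ" unfolding SQ_def X using cimg by auto
  qed
  have injP: "inj_on \<Phi> \<Sigma>"
  proof (rule inj_onI)
    fix X Y assume XY: "X \<in> \<Sigma>" "Y \<in> \<Sigma>" "\<Phi> X = \<Phi> Y"
    obtain S \<sigma> S' \<tau> where XY': "X = (S, \<sigma>)" "Y = (S', \<tau>)" by (cases X, cases Y) auto
    have a: "(S, \<sigma>) \<in> \<Sigma>" "(S', \<tau>) \<in> \<Sigma>" and eq: "\<Phi> (S, \<sigma>) = \<Phi> (S', \<tau>)"
      using XY XY' by auto
    have S: "S \<subseteq> P" "\<sigma> \<in> S \<rightarrow>\<^sub>E {..<m}" using a by (auto simp: \<Sigma>_def SP_def)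
    have S': "S' \<subseteq> P" "\<tau> \<in> S' \<rightarrow>\<^sub>E {..<m}" using a by (auto simp: \<Sigma>_def SP_def)
    have key: "\<And>x. x \<in> S \<Longrightarrow> x \<in> S' \<and> \<sigma> x = \<tau> x"
    proof -
      fix x assume x: "x \<in> S"
      have "f (x, \<sigma> x) \<in> \<Phi> (S', \<tau>)" using eq x unfolding \<Phi>_def by (metis (no_types, lifting) case_prod_conv image_eqI)
      then obtain y where y: "y \<in> S'" "f (x, \<sigma> x) = f (y, \<tau> y)" unfolding \<Phi>_def by auto
      have "(x, \<sigma> x) = (y, \<tau> y)"
        using inj_onD[OF inj y(2)] x y(1) S S' by fastforce
      thus "x \<in> S' \<and> \<sigma> x = \<tau> x" using y by auto
    qed
    have key': "\<And>x. x \<in> S' \<Longrightarrow> x \<in> S"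
    proof -
      fix x assume x: "x \<in> S'"
      have "f (x, \<tau> x) \<in> \<Phi> (S, \<sigma>)" using eq x unfolding \<Phi>_def by (metis (no_types, lifting) case_prod_conv image_eqI)
      then obtain y where y: "y \<in> S" "f (x, \<tau> x) = f (y, \<sigma> y)" unfolding \<Phi>_def by auto
      have "(x, \<tau> x) = (y, \<sigma> y)"
        using inj_onD[OF inj y(2)] x y(1) S S' by fastforce
      thus "x \<in> S" using y by auto
    qed
    have SS: "S = S'" using key key' by blast
    have "\<sigma> = \<tau>"
    proof
      fix x show "\<sigma> x = \<tau> x"
        using key S(2) S'(2) SS by (cases "x \<in> S") (auto simp: PiE_def extensional_def)
    qed
    thus "X = Y" using SS XY' by simp
  qed
  have card\<Sigma>: "card \<Sigma> = m^3 * card SP"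
  proof -
    have "card \<Sigma> = (\<Sum>S\<in>SP. card (S \<rightarrow>\<^sub>E {..<m}))" unfolding \<Sigma>_def
      using finSP by (intro card_SigmaI) (auto simp: SP_def intro!: finite_PiE dest: finite_subset[OF _ finP])
    also have "\<dots> = (\<Sum>S\<in>SP. m^3)"
    proof (rule sum.cong)
      fix S assume "S \<in> SP"
      hence "finite S" "card S = 3" using finP by (auto simp: SP_def dest: finite_subset)
      thus "card (S \<rightarrow>\<^sub>E {..<m}) = m^3" by (simp add: card_PiE)
    qed simp
    finally show ?thesis by simp
  qed
  have "m^3 * count_eps P T \<epsilon> = card \<Sigma>" unfolding count_eps_def card\<Sigma> SP_def ..
  also have "\<dots> = card (\<Phi> ` \<Sigma>)" using card_image[OF injP] by simp
  also have "\<dots> \<le> card SQ" using card_mono[OF finSQ img] .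
  finally show ?thesis using finQ cardQ unfolding count_eps_def SQ_def by blast
qed

lemma count_le:
  assumes "finite P"
  shows "count_eps P T \<epsilon> \<le> 2 ^ card P"
proof -
  have "count_eps P T \<epsilon> \<le> card (Pow P)" unfolding count_eps_def
    using assms by (intro card_mono) auto
  thus ?thesis using assms by (simp add: card_Pow)
qed

lemma cnt_set_fin: "finite {count_eps P T \<epsilon> | P. finite P \<and> card P = n}"
  by (rule finite_subset[of _ "{..2^n}"]) (auto intro: count_le)

lemma cnt_set_ne: "{count_eps P T \<epsilon> | P. finite P \<and> card P = n} \<noteq> {}"
proof -
  obtain P :: "(real^2) set" where "finite P" "card P = n"
    using infinite_arbitrarily_large[OF infinite_UNIV_char_0] by blast
  thus ?thesis by blast
qed

lemma h_eps_ge: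
  assumes "finite P" "card P = n"
  shows "count_eps P T \<epsilon> \<le> h_eps n T \<epsilon>"
  unfolding h_eps_def using assms by (intro Max_ge[OF cnt_set_fin]) auto

lemma h_eps_att: "\<exists>P. finite P \<and> card P = n \<and> count_eps P T \<epsilon> = h_eps n T \<epsilon>"
proof -
  have "h_eps n T \<epsilon> \<in> {count_eps P T \<epsilon> | P. finite P \<and> card P = n}"
    unfolding h_eps_def by (rule Max_in[OF cnt_set_fin cnt_set_ne])
  thus ?thesis by auto
qed

lemma h_le: "\<epsilon> > 0 \<Longrightarrow> h n T \<le> h_eps n T \<epsilon>"
  unfolding h_def by (rule cInf_lower) auto

lemma h_mult:
  assumes ms: "min_side T > 0" and mp: "m > 0"
  shows "m^3 * h n T \<le> h (n*m) T"
  unfolding h_def[of "n*m"]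
proof (rule cInf_greatest)
  show "{h_eps (n * m) T \<epsilon> |\<epsilon>. 0 < \<epsilon>} \<noteq> {}" by (auto intro: exI[of _ 1])
next
  fix x assume "x \<in> {h_eps (n * m) T \<epsilon> |\<epsilon>. 0 < \<epsilon>}"
  then obtain \<epsilon> where ep: "\<epsilon> > 0" and x: "x = h_eps (n * m) T \<epsilon>" by auto
  obtain P where P: "finite P" "card P = n" "count_eps P T (\<epsilon>/2) = h_eps n T (\<epsilon>/2)"
    using h_eps_att by blast
  obtain Q where Q: "finite Q" "card Q = card P * m" "m^3 * count_eps P T (\<epsilon>/2) \<le> count_eps Q T (2*(\<epsilon>/2))"
    using blowup[OF P(1) _ ms mp, of "\<epsilon>/2"] ep by auto
  have "m^3 * h n T \<le> m^3 * h_eps n T (\<epsilon>/2)" using h_le[of "\<epsilon>/2"] ep by simp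
  also have "\<dots> \<le> count_eps Q T \<epsilon>" using Q(3) P(3) by simp
  also have "\<dots> \<le> x" unfolding x using h_eps_ge[OF Q(1)] Q(2) P(2) by simp
  finally show "m^3 * h n T \<le> x" .
qed

theorem lemma4p1:
  fixes T :: "real \<times> real \<times> real" and a :: real
  assumes "is_triangle T"
    and "0 \<le> a" and "a \<le> 1"
    and "\<exists>g :: nat \<Rightarrow> real. g \<longlonglongrightarrow> 0 \<and>
           (\<forall>\<^sub>F n in sequentially. real (h n T) \<le> a * real n ^ 3 * (1 + g n))"
  shows "\<forall>n :: nat. n > 0 \<longrightarrow> real (h n T) \<le> a * real n ^ 3"
proof (intro allI impI)
  fix n :: nat assume np: "n > 0"
  have ms: "min_side T > 0" using assms(1) unfolding is_triangle_def min_side_def by auto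
  obtain g :: "nat \<Rightarrow> real" where g: "g \<longlonglongrightarrow> 0"
    and ev: "\<forall>\<^sub>F k in sequentially. real (h k T) \<le> a * real k ^ 3 * (1 + g k)"
    using assms(4) by blast
  have fl: "filterlim (\<lambda>m. n * m) sequentially sequentially"
    unfolding filterlim_at_top eventually_at_top_linorder
  proof
    fix Z :: nat
    have "\<forall>m\<ge>Z. Z \<le> n * m"
    proof (intro allI impI)
      fix m assume "Z \<le> m" thus "Z \<le> n * m" using np
        by (metis dual_order.trans mult_le_mono1 Suc_leI mult_Suc mult_0 add_0_right)
    qed
    thus "\<exists>N. \<forall>m\<ge>N. Z \<le> n * m" by blast
  qed
  have g2: "(\<lambda>m. g (n*m)) \<longlonglongrightarrow> 0" using filterlim_compose[OF g fl] by simp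
  have ev2: "\<forall>\<^sub>F m in sequentially. real (h (n*m) T) \<le> a * real (n*m) ^ 3 * (1 + g (n*m))"
    using filterlim_iff[THEN iffD1, OF fl] ev by blast
  have ev3: "\<forall>\<^sub>F m in sequentially. real (h n T) \<le> a * real n ^ 3 * (1 + g (n*m))"
    using ev2 eventually_gt_at_top[of 0]
  proof eventually_elim
    case (elim m)
    have "real m ^ 3 * real (h n T) \<le> real (h (n*m) T)"
      using h_mult[OF ms elim(2), of n] by (metis of_nat_le_iff of_nat_mult of_nat_power)
    also have "\<dots> \<le> real m ^ 3 * (a * real n ^ 3 * (1 + g (n*m)))"
      using elim(1) by (simp add: power_mult_distrib algebra_simps)
    finally show ?case using elim(2) by simp
  qed
  have lim: "(\<lambda>m. a * real n ^ 3 * (1 + g (n*m))) \<longlonglongrightarrow> a * real n ^ 3 * (1 + 0)"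
    by (intro tendsto_intros g2)
  show "real (h n T) \<le> a * real n ^ 3"
    using tendsto_le[OF trivial_limit_sequentially lim tendsto_const ev3] by simp
qed

end
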